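(* Let $n$ be a prime, let $\alpha$ be a primitive element of $\mathbb{F}_{2^n}$, identify $\mathbb{F}_2^n$ with $\mathbb{F}_{2^n}$ as $\mathbb{F}_2$-vector spaces, and let $k\ge 2$. If there exist $\frac{2^n-2}{(2^k-1)(2^k-2)}$ pairwise disjoint complete $k$-dimensional subspaces of $\mathbb{F}_2^n$, then there exists a Steiner structure $\mathbb{S}_2[2,k,n]$.
   Context: For a $k$-dimensional subspace $X=\{0,\alpha^{i_1},\dots,\alpha^{i_{2^k-1}}\}$ of $\mathbb{F}_2^n$ (exponents in $\mathbb{Z}_{2^n-1}$), its difference set is $\Delta(X)=\{i_r-i_s \bmod (2^n-1): 1\le r,s\le 2^k-1,\ r\ne s\}$. $X$ is complete if $|\Delta(X)|=(2^k-1)(2^k-2)$. Two complete subspaces $X,Y$ are disjoint complete if $\Delta(X)\cap\Delta(Y)=\varnothing$. A Steiner structure $\mathbb{S}_2[2,k,n]$ is a set of $k$-dimensional subspaces of $\mathbb{F}_2^n$ such that each $2$-dimensional subspace of $\mathbb{F}_2^n$ is contained in exactly one of them. *)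

theory Defs
  imports Complex_Main "HOL-Computational_Algebra.Primes" "HOL-Library.Cardinality"
begin

text \<open>We work in a finite field 'a with 2^n elements (a model of F_{2^n}), viewed as an
  F_2-vector space.  Since the only scalars of F_2 are 0 and 1, an F_2-subspace is exactly a
  subset containing 0 and closed under addition; an F_2-subspace of dimension k has exactly
  2^k elements.\<close>

definition f2_subspace :: "'a::field set \<Rightarrow> bool" where
  "f2_subspace V \<longleftrightarrow> 0 \<in> V \<and> (\<forall>x\<in>V. \<forall>y\<in>V. x + y \<in> V)
      \<and> (\<forall>c\<in>{0::'a, 1}. \<forall>x\<in>V. c * x \<in> V)"

definition f2_subspace_dim :: "nat \<Rightarrow> 'a::field set \<Rightarrow> bool" where
  "f2_subspace_dim k V \<longleftrightarrow> f2_subspace V \<and> finite V \<and> card V = 2 ^ k"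

definition primitive_elem :: "'a::field \<Rightarrow> bool" where
  "primitive_elem a \<longleftrightarrow> a \<noteq> 0 \<and> (\<forall>x. x \<noteq> 0 \<longrightarrow> (\<exists>i::nat. a ^ i = x))"

definition dlog :: "'a::{field,finite} \<Rightarrow> 'a \<Rightarrow> nat" where
  "dlog a x = (THE i. i < CARD('a) - 1 \<and> a ^ i = x)"

definition diff_set :: "'a::{field,finite} \<Rightarrow> 'a set \<Rightarrow> int set" where
  "diff_set a X = {(int (dlog a x) - int (dlog a y)) mod (int CARD('a) - 1) | x y.
       x \<in> X - {0} \<and> y \<in> X - {0} \<and> x \<noteq> y}"

definition complete_subspace :: "'a::{field,finite} \<Rightarrow> nat \<Rightarrow> 'a set \<Rightarrow> bool" where
  "complete_subspace a k X \<longleftrightarrow> f2_subspace_dim k X \<and>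
     card (diff_set a X) = (2 ^ k - 1) * (2 ^ k - 2)"

definition steiner_structure :: "nat \<Rightarrow> 'a::field set set \<Rightarrow> bool" where
  "steiner_structure k S \<longleftrightarrow> (\<forall>V\<in>S. f2_subspace_dim k V) \<and>
     (\<forall>L. f2_subspace_dim 2 L \<longrightarrow> (\<exists>!V. V \<in> S \<and> L \<subseteq> V))"

end

theory Submission imports Defs begin

lemma card_ge2: "CARD('a::{field,finite}) \<ge> 2"
proof -
  have "card {0::'a, 1} = 2" by simp
  moreover have "card {0::'a,1} \<le> CARD('a)" by (rule card_mono) auto
  ultimately show ?thesis by simp
qed

lemma prim_props:
  fixes a :: "'a::{field,finite}"
  assumes "primitive_elem a"
  shows "a ^ (CARD('a) - 1) = 1 \<and> inj_on (\<lambda>i. a^i) {..<CARD('a)-1}"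
proof -
  have a0: "a \<noteq> 0" using assms by (simp add: primitive_elem_def)
  have cpos: "CARD('a) > 0" by simp
  have "\<not> inj_on (\<lambda>i. a^i) {..<CARD('a)}"
  proof
    assume inj: "inj_on (\<lambda>i. a^i) {..<CARD('a)}"
    have "card ((\<lambda>i. a^i) ` {..<CARD('a)}) = CARD('a)" using card_image[OF inj] by simp
    moreover have "(\<lambda>i. a^i) ` {..<CARD('a)} \<subseteq> UNIV - {0}" using a0 by auto
    hence "card ((\<lambda>i. a^i) ` {..<CARD('a)}) \<le> card (UNIV - {0::'a})" by (intro card_mono) auto
    moreover have "card (UNIV - {0::'a}) = CARD('a) - 1" by (simp add: card_Diff_singleton)
    ultimately show False using cpos by linarith
  qed
  then obtain i j where ij: "i < CARD('a)" "j < CARD('a)" "i \<noteq> j" "a^i = a^j"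
    by (auto simp: inj_on_def)
  have ex: "\<exists>m. 0 < m \<and> m < CARD('a) \<and> a^m = 1"
  proof (cases "i < j")
    case True
    have "a^j = a^i * a^(j-i)" using True by (simp flip: power_add)
    hence "a^(j-i) = 1" using ij a0 by simp
    thus ?thesis using True ij by (intro exI[of _ "j-i"]) auto
  next
    case False
    hence "j < i" using ij by simp
    have "a^i = a^j * a^(i-j)" using \<open>j<i\<close> by (simp flip: power_add)
    hence "a^(i-j) = 1" using ij a0 by simp
    thus ?thesis using \<open>j<i\<close> ij by (intro exI[of _ "i-j"]) auto
  qed
  define m where "m = (LEAST m. 0 < m \<and> a^m = 1)"
  have m: "0 < m" "a^m = 1" unfolding m_def using ex by (metis (mono_tags, lifting) LeastI_ex)+
  have mle: "m < CARD('a)" using ex unfolding m_def by (metis (mono_tags, lifting) Least_le le_less_trans)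
  have pw: "a^i = a^(i mod m)" for i
  proof -
    have "a^i = a^(m*(i div m) + i mod m)" by simp
    also have "\<dots> = (a^m)^(i div m) * a^(i mod m)" by (simp only: power_add power_mult)
    finally show ?thesis using m by simp
  qed
  have "UNIV - {0} \<subseteq> (\<lambda>i. a^i) ` {..<m}"
  proof
    fix x :: 'a assume "x \<in> UNIV - {0}"
    then obtain i where "a^i = x" using assms by (auto simp: primitive_elem_def)
    thus "x \<in> (\<lambda>i. a^i) ` {..<m}" using pw[of i] m by (auto intro!: image_eqI[of _ _ "i mod m"])
  qed
  hence "card (UNIV - {0::'a}) \<le> card ((\<lambda>i. a^i) ` {..<m})" by (intro card_mono) auto
  also have "\<dots> \<le> m" using card_image_le[of "{..<m}" "\<lambda>i. a^i"] by simp
  finally have "CARD('a) - 1 \<le> m" by (simp add: card_Diff_singleton)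
  hence meq: "m = CARD('a) - 1" using mle by simp
  have "inj_on (\<lambda>i. a^i) {..<m}"
  proof (rule inj_onI, rule ccontr)
    fix i j assume h: "i \<in> {..<m}" "j \<in> {..<m}" "a^i = a^j" "i \<noteq> j"
    have *: "a^(j-i) = 1" if "i < j" "a^i = a^j" for i j
    proof -
      have "a^j = a^i * a^(j-i)" using that(1) by (simp flip: power_add)
      thus ?thesis using that a0 by simp
    qed
    obtain d where d: "0 < d" "d < m" "a^d = 1"
      using h *[of i j] *[of j i] by (cases "i < j") (auto intro: that[of "j-i"] that[of "i-j"])
    have "m \<le> d" unfolding m_def using d by (intro Least_le) auto
    thus False using d by simp
  qed
  thus ?thesis using m meq by simp
qed

lemma pow_mod:
  fixes a :: "'a::{field,finite}"
  assumes "primitive_elem a"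
  shows "a^i = a^(i mod (CARD('a) - 1))"
proof -
  define M where "M = CARD('a) - 1"
  have m: "a^M = 1" using prim_props[OF assms] M_def by simp
  have "a^i = a^(M*(i div M) + i mod M)" by simp
  also have "\<dots> = (a^M)^(i div M) * a^(i mod M)" by (simp only: power_add power_mult)
  finally show ?thesis using m M_def by simp
qed

lemma pow_eq_iff:
  fixes a :: "'a::{field,finite}"
  assumes "primitive_elem a"
  shows "a^i = a^j \<longleftrightarrow> i mod (CARD('a) - 1) = j mod (CARD('a) - 1)"
proof -
  have M: "CARD('a) - 1 > 0" using card_ge2[where 'a='a] by simp
  have inj: "inj_on (\<lambda>i. a^i) {..<CARD('a)-1}" using prim_props[OF assms] by simp
  have "a^i = a^j \<longleftrightarrow> a^(i mod (CARD('a) - 1)) = a^(j mod (CARD('a) - 1))"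
    using pow_mod[OF assms] by metis
  also have "\<dots> \<longleftrightarrow> i mod (CARD('a) - 1) = j mod (CARD('a) - 1)"
    using inj_onD[OF inj] M by auto
  finally show ?thesis .
qed

lemma dlog_props:
  fixes a :: "'a::{field,finite}"
  assumes "primitive_elem a" "x \<noteq> 0"
  shows "dlog a x < CARD('a) - 1 \<and> a ^ dlog a x = x"
proof -
  have M: "CARD('a) - 1 > 0" using card_ge2[where 'a='a] by simp
  obtain i where i: "a^i = x" using assms by (auto simp: primitive_elem_def)
  have inj: "inj_on (\<lambda>i. a^i) {..<CARD('a)-1}" using prim_props[OF assms(1)] by simp
  have "\<exists>!j. j < CARD('a) - 1 \<and> a^j = x"
  proof
    show "i mod (CARD('a) - 1) < CARD('a) - 1 \<and> a^(i mod (CARD('a) - 1)) = x"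
      using M i pow_mod[OF assms(1), of i] by simp
  next
    fix j assume "j < CARD('a) - 1 \<and> a^j = x"
    thus "j = i mod (CARD('a) - 1)"
      using inj_onD[OF inj, of j "i mod (CARD('a) - 1)"] M i pow_mod[OF assms(1), of i] by auto
  qed
  thus ?thesis unfolding dlog_def by (rule theI')
qed

lemma R:
  fixes a :: "'a::{field,finite}"
  assumes "primitive_elem a" "x \<noteq> 0" "y \<noteq> 0" "x' \<noteq> 0" "y' \<noteq> 0"
  shows "(int (dlog a x) - int (dlog a y)) mod (int CARD('a) - 1) =
         (int (dlog a x') - int (dlog a y')) mod (int CARD('a) - 1) \<longleftrightarrow> x * y' = x' * y"
proof -
  define M where "M = CARD('a) - 1"
  have iM: "int CARD('a) - 1 = int M" using card_ge2[where 'a='a] M_def by simp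
  have "x * y' = x' * y \<longleftrightarrow> a^(dlog a x + dlog a y') = a^(dlog a x' + dlog a y)"
    using dlog_props[OF assms(1)] assms by (simp add: power_add)
  also have "\<dots> \<longleftrightarrow> (dlog a x + dlog a y') mod M = (dlog a x' + dlog a y) mod M"
    using pow_eq_iff[OF assms(1)] M_def by simp
  also have "\<dots> \<longleftrightarrow> int (dlog a x + dlog a y') mod int M = int (dlog a x' + dlog a y) mod int M"
    by (metis of_nat_eq_iff of_nat_mod)
  also have "\<dots> \<longleftrightarrow> int M dvd (int (dlog a x) + int (dlog a y') - int (dlog a x') - int (dlog a y))"
    by (simp add: mod_eq_dvd_iff algebra_simps)
  also have "\<dots> \<longleftrightarrow> (int (dlog a x) - int (dlog a y)) mod int M =
         (int (dlog a x') - int (dlog a y')) mod int M"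
    by (simp add: mod_eq_dvd_iff algebra_simps)
  finally show ?thesis using iM by simp
qed


theorem theorem1:
  fixes a :: "'a::{field,finite}" and n k :: nat
  assumes "prime n"
    and "CARD('a) = 2 ^ n"
    and "primitive_elem a"
    and "k \<ge> 2"
    and "\<exists>F :: 'a set set.
           real (card F) = (2 ^ n - 2) / ((2 ^ k - 1) * (2 ^ k - 2) :: real) \<and>
           (\<forall>X\<in>F. complete_subspace a k X) \<and>
           (\<forall>X\<in>F. \<forall>Y\<in>F. X \<noteq> Y \<longrightarrow> diff_set a X \<inter> diff_set a Y = {})"
  shows "\<exists>S :: 'a set set. steiner_structure k S"
proof -
  obtain F :: "'a set set" where Fc: "real (card F) = (2 ^ n - 2) / ((2 ^ k - 1) * (2 ^ k - 2) :: real)"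
    and Fcomp: "\<forall>X\<in>F. complete_subspace a k X"
    and Fdis: "\<forall>X\<in>F. \<forall>Y\<in>F. X \<noteq> Y \<longrightarrow> diff_set a X \<inter> diff_set a Y = {}"
    using assms(5) by blast
  define q where "q = CARD('a)"
  have "n \<ge> 2" using assms(1) prime_ge_2_nat by blast
  hence "(2::nat)^2 \<le> 2^n" by (intro power_increasing) auto
  hence q4: "q \<ge> 4" using assms(2) q_def by simp
  define dd where "dd x y = (int (dlog a x) - int (dlog a y)) mod (int CARD('a) - 1)" for x y :: 'a
  have RR: "dd x y = dd x' y' \<longleftrightarrow> x * y' = x' * y"
    if "x \<noteq> 0" "y \<noteq> 0" "x' \<noteq> 0" "y' \<noteq> 0" for x y x' y'
    unfolding dd_def using R[OF assms(3) that] .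
  define P where "P X = {(x,y). x \<in> X-{0} \<and> y \<in> X-{0} \<and> x \<noteq> y}" for X :: "'a set"
  have dsX: "diff_set a X = (\<lambda>(x,y). dd x y) ` P X" for X
    unfolding diff_set_def dd_def P_def by auto
  have rng: "dd x y \<in> {1..int q - 2}" if "x \<noteq> 0" "y \<noteq> 0" "x \<noteq> y" for x y
  proof -
    have "dd x y \<noteq> dd y y" using RR[of x y y y] that by simp
    moreover have "dd y y = 0" unfolding dd_def by simp
    moreover have "0 \<le> dd x y" "dd x y < int q - 1" unfolding dd_def q_def using q4 q_def by auto
    ultimately show ?thesis by auto
  qed
  define N where "N = (2^k-1)*(2^k-2::nat)"
  have k4: "(2::nat)^k \<ge> 4" using assms(4) power_increasing[of 2 k "2::nat"] by simp
  have Npos: "N > 0" unfolding N_def using k4 by simp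
  have rN: "real N = (2 ^ k - 1) * (2 ^ k - 2 :: real)" unfolding N_def using k4
    by (simp add: of_nat_diff)
  have "real (card F) = (2^n - 2) / real N" using Fc rN by simp
  hence "real (card F) * real N = 2^n - 2" using Npos by simp
  hence "real (card F * N) = real (q - 2)" using q4 assms(2) q_def by (simp add: of_nat_diff)
  hence cardF: "card F * N = q - 2" by (simp only: of_nat_eq_iff)
  have Xfacts: "f2_subspace X \<and> card X = 2^k \<and> card (diff_set a X) = N" if "X \<in> F" for X
    using Fcomp that unfolding complete_subspace_def f2_subspace_dim_def N_def by auto
  have cardP: "card (P X) = N" if "X \<in> F" for X
  proof -
    have X0: "0 \<in> X" "card X = 2^k" using Xfacts[OF that] by (auto simp: f2_subspace_def)
    have cX: "card (X - {0}) = 2^k - 1" using X0 by (simp add: card_Diff_singleton)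
    have "P X = Sigma (X - {0}) (\<lambda>x. X - {0} - {x})" unfolding P_def by auto
    hence "card (P X) = (\<Sum>x\<in>X-{0}. card (X - {0} - {x}))" by simp
    also have "\<dots> = (\<Sum>x\<in>X-{0}. 2^k - 2)" using cX by (intro sum.cong) (auto simp: card_Diff_singleton)
    finally show ?thesis using cX N_def by simp
  qed
  have injP: "inj_on (\<lambda>(x,y). dd x y) (P X)" if "X \<in> F" for X
    by (rule eq_card_imp_inj_on) (use cardP[OF that] Xfacts[OF that] dsX in auto)
  have Ufin: "finite (diff_set a X)" for X
    unfolding dsX P_def by simp
  have "card (\<Union>X\<in>F. diff_set a X) = (\<Sum>X\<in>F. card (diff_set a X))"
    by (rule card_UN_disjoint) (use Fdis Ufin in auto)
  also have "\<dots> = card F * N" using Xfacts by simp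
  finally have cU: "card (\<Union>X\<in>F. diff_set a X) = q - 2" using cardF by simp
  have Usub: "(\<Union>X\<in>F. diff_set a X) \<subseteq> {1..int q - 2}"
    unfolding dsX P_def using rng by auto
  have U: "(\<Union>X\<in>F. diff_set a X) = {1..int q - 2}"
    by (rule card_subset_eq) (use Usub cU q4 in auto)
  define S where "S = {(\<lambda>x. c*x) ` X | c X. c \<noteq> 0 \<and> X \<in> F}"
  have Sdim: "f2_subspace_dim k V" if "V \<in> S" for V
  proof -
    obtain c X where V: "V = (\<lambda>x. c*x) ` X" "c \<noteq> 0" "X \<in> F" using \<open>V \<in> S\<close> S_def by auto
    have sX: "f2_subspace X" "card X = 2^k" using Xfacts[OF V(3)] by auto
    have "f2_subspace V" using sX(1) unfolding V(1) f2_subspace_def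
      by (auto simp: image_iff distrib_left[symmetric] simp del: distrib_left)
    moreover have "card V = 2^k" using sX V by (simp add: card_image inj_on_def)
    ultimately show ?thesis unfolding f2_subspace_dim_def by simp
  qed
  have main: "\<exists>!V. V \<in> S \<and> L \<subseteq> V" if L: "f2_subspace_dim 2 L" for L
  proof -
    have L0: "0 \<in> L" and Lc: "\<And>x y. x \<in> L \<Longrightarrow> y \<in> L \<Longrightarrow> x + y \<in> L" and Lcard: "card L = 4"
      and Lfin: "finite L"
      using L unfolding f2_subspace_dim_def f2_subspace_def by auto
    have "card (L - {0}) = 3" using Lcard L0 Lfin by (simp add: card_Diff_singleton)
    then obtain x y z where xyz: "L - {0} = {x,y,z}" "x \<noteq> y" "y \<noteq> z" "x \<noteq> z"
      by (auto simp: card_3_iff)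
    obtain u v where uv: "u \<in> L" "v \<in> L" "u \<noteq> 0" "v \<noteq> 0" "u \<noteq> v" "u + v \<noteq> 0"
    proof (cases "x + y = 0")
      case True
      hence "x + z \<noteq> 0" using xyz by (metis add_left_cancel)
      thus ?thesis using xyz that[of x z] by blast
    next
      case False
      thus ?thesis using xyz that[of x y] by blast
    qed
    have w: "u + v \<in> L" "u + v \<noteq> u" "u + v \<noteq> v" using uv Lc by auto
    have "{0, u, v, u+v} \<subseteq> L" using L0 uv w by auto
    moreover have "card {0, u, v, u+v} = 4" using uv w by auto
    ultimately have Leq: "L = {0, u, v, u+v}"
      by (metis Lcard Lfin card_subset_eq)
    have ex: "\<exists>V. V \<in> S \<and> L \<subseteq> V"
    proof -
      have "dd u v \<in> {1..int q - 2}" using rng uv by auto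
      then obtain X where X: "X \<in> F" "dd u v \<in> diff_set a X"
        using U \<open>dd u v \<in> {1..int q - 2}\<close> by (metis UN_E)
      then obtain x y where xy: "x \<in> X" "y \<in> X" "x \<noteq> 0" "y \<noteq> 0" "x \<noteq> y" "dd u v = dd x y"
        unfolding dsX P_def by auto
      have e: "u * y = x * v" using RR[of u v x y] xy uv by simp
      define c where "c = u / x"
      have c0: "c \<noteq> 0" using uv xy c_def by simp
      have cx: "c * x = u" using xy c_def by simp
      have cy: "c * y = v" using xy e unfolding c_def by (simp add: field_simps)
      have sX: "f2_subspace X" using Xfacts[OF X(1)] by simp
      have "x + y \<in> X" using sX xy unfolding f2_subspace_def by auto
      moreover have "0 \<in> X" using sX unfolding f2_subspace_def by auto
      ultimately have "L \<subseteq> (\<lambda>x. c*x) ` X" unfolding Leq using cx cy xy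
        by (auto simp: image_iff distrib_left intro: bexI[of _ "x+y"] bexI[of _ 0])
      moreover have "(\<lambda>x. c*x) ` X \<in> S" unfolding S_def using c0 X by auto
      ultimately show ?thesis by blast
    qed
    have un: "V1 = V2" if hV: "V1 \<in> S" "L \<subseteq> V1" "V2 \<in> S" "L \<subseteq> V2" for V1 V2
    proof -
      obtain c1 X1 where V1: "V1 = (\<lambda>x. c1*x) ` X1" "c1 \<noteq> 0" "X1 \<in> F" using hV(1) S_def by auto
      obtain c2 X2 where V2: "V2 = (\<lambda>x. c2*x) ` X2" "c2 \<noteq> 0" "X2 \<in> F" using hV(3) S_def by auto
      have mem: "t / c \<in> X" if "t \<in> (\<lambda>x. c*x) ` X" "c \<noteq> 0" for t c and X :: "'a set"
        using that by auto
      have in1: "u / c1 \<in> X1" "v / c1 \<in> X1" using mem[of u c1 X1] mem[of v c1 X1] V1 hV(2) uv by auto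
      have in2: "u / c2 \<in> X2" "v / c2 \<in> X2" using mem[of u c2 X2] mem[of v c2 X2] V2 hV(4) uv by auto
      have p1: "(u/c1, v/c1) \<in> P X1" unfolding P_def using in1 uv V1 by (auto simp: field_simps)
      have p2: "(u/c2, v/c2) \<in> P X2" unfolding P_def using in2 uv V2 by (auto simp: field_simps)
      have eqd: "dd (u/c1) (v/c1) = dd (u/c2) (v/c2)"
        using RR[of "u/c1" "v/c1" "u/c2" "v/c2"] uv V1 V2 by (simp add: field_simps)
      have "dd (u/c1) (v/c1) \<in> diff_set a X1" unfolding dsX using p1 by force
      moreover have "dd (u/c1) (v/c1) \<in> diff_set a X2" unfolding dsX using p2 eqd by force
      ultimately have "X1 = X2" using Fdis V1 V2 by blast
      hence "(u/c1, v/c1) = (u/c2, v/c2)" using inj_onD[OF injP[OF V1(3)], of "(u/c1, v/c1)" "(u/c2, v/c2)"] p1 p2 eqd by simp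
      hence "c1 = c2" using uv V1 V2 by (auto simp: field_simps)
      thus ?thesis using V1 V2 \<open>X1 = X2\<close> by simp
    qed
    show ?thesis using ex un by blast
  qed
  show ?thesis unfolding steiner_structure_def using Sdim main by blast
qed

end
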